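(* Let $(\mathfrak A,\alpha,\omega)$ be a $C^*$-dynamical system with GNS covariant representation $(\mathcal H,\pi,U,\Omega)$, and suppose that the support $s(\omega)$ of $\omega$ in the bidual $\mathfrak A^{**}$ is central (equivalently, $\Omega$ is separating for $M:=\pi(\mathfrak A)''$). Then for every $z\in\mathbb T$, $$\overline{M_z\Omega}=\overline{(M')_z\Omega}=E_z\mathcal H .$$ Moreover $\sigma_{\mathrm{pp}}(U)=\sigma_{\mathrm{pp}}(U)^{-1}$, i.e. $z\in\sigma_{\mathrm{pp}}(U)$ implies $\bar z\in\sigma_{\mathrm{pp}}(U)$.
   Context: A $C^*$-dynamical system $(\mathfrak A,\alpha,\omega)$ consists of a $C^*$-algebra $\mathfrak A$, an automorphism $\alpha$ of $\mathfrak A$, and a state $\omega$ on $\mathfrak A$ with $\omega\circ\alpha=\omega$. Its GNS covariant representation $(\mathcal H,\pi,U,\Omega)$ consists of the GNS triple $(\mathcal H,\pi,\Omega)$ of $\omega$ together with the unitary $U$ on $\mathcal H$ determined by $U\pi(A)\Omega=\pi(\alpha(A))\Omega$; thus $U\pi(A)U^*=\pi(\alpha(A))$ and $U\Omega=\Omega$. $M:=\pi(\mathfrak A)''$ and $M'$ is its commutant. For $z\in\mathbb T$, $E_z$ denotes the orthogonal projection onto the eigenspace $\{x\in\mathcal H: Ux=zx\}$, $\sigma_{\mathrm{pp}}(U)$ is the set of eigenvalues of $U$, $M_z:=\{A\in M: UAU^*=zA\}$ and $(M')_z:=\{B\in M': UBU^*=zB\}$. *)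

theory Defs
  imports "HOL-Analysis.Analysis"
begin

section \<open>Abstract C*-algebras (carrier = the whole type 'a)\<close>

record 'a cstar_alg =
  cadd   :: "'a \<Rightarrow> 'a \<Rightarrow> 'a"
  czero  :: "'a"
  csmult :: "complex \<Rightarrow> 'a \<Rightarrow> 'a"
  cmult  :: "'a \<Rightarrow> 'a \<Rightarrow> 'a"
  cstar  :: "'a \<Rightarrow> 'a"
  cnorm  :: "'a \<Rightarrow> real"

definition cstar_algebra :: "'a cstar_alg \<Rightarrow> bool" where
  "cstar_algebra A \<longleftrightarrow>
     \<comment> \<open>complex vector space\<close>
     (\<forall>a b c. cadd A (cadd A a b) c = cadd A a (cadd A b c)) \<and>
     (\<forall>a b. cadd A a b = cadd A b a) \<and>
     (\<forall>a. cadd A a (czero A) = a) \<and>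
     (\<forall>a. cadd A a (csmult A (-1) a) = czero A) \<and>
     (\<forall>a. csmult A 1 a = a) \<and>
     (\<forall>c d a. csmult A (c * d) a = csmult A c (csmult A d a)) \<and>
     (\<forall>c d a. csmult A (c + d) a = cadd A (csmult A c a) (csmult A d a)) \<and>
     (\<forall>c a b. csmult A c (cadd A a b) = cadd A (csmult A c a) (csmult A c b)) \<and>
     \<comment> \<open>associative algebra\<close>
     (\<forall>a b c. cmult A (cmult A a b) c = cmult A a (cmult A b c)) \<and>
     (\<forall>a b c. cmult A (cadd A a b) c = cadd A (cmult A a c) (cmult A b c)) \<and>
     (\<forall>a b c. cmult A a (cadd A b c) = cadd A (cmult A a b) (cmult A a c)) \<and>
     (\<forall>k a b. cmult A (csmult A k a) b = csmult A k (cmult A a b)) \<and>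
     (\<forall>k a b. cmult A a (csmult A k b) = csmult A k (cmult A a b)) \<and>
     \<comment> \<open>involution\<close>
     (\<forall>a. cstar A (cstar A a) = a) \<and>
     (\<forall>a b. cstar A (cadd A a b) = cadd A (cstar A a) (cstar A b)) \<and>
     (\<forall>k a. cstar A (csmult A k a) = csmult A (cnj k) (cstar A a)) \<and>
     (\<forall>a b. cstar A (cmult A a b) = cmult A (cstar A b) (cstar A a)) \<and>
     \<comment> \<open>norm\<close>
     (\<forall>a. cnorm A a \<ge> 0) \<and>
     (\<forall>a. cnorm A a = 0 \<longleftrightarrow> a = czero A) \<and>
     (\<forall>a b. cnorm A (cadd A a b) \<le> cnorm A a + cnorm A b) \<and>
     (\<forall>k a. cnorm A (csmult A k a) = cmod k * cnorm A a) \<and>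
     (\<forall>a b. cnorm A (cmult A a b) \<le> cnorm A a * cnorm A b) \<and>
     (\<forall>a. cnorm A (cmult A (cstar A a) a) = (cnorm A a)\<^sup>2) \<and>
     \<comment> \<open>completeness\<close>
     (\<forall>f :: nat \<Rightarrow> 'a.
        (\<forall>e>0. \<exists>N. \<forall>m\<ge>N. \<forall>n\<ge>N. cnorm A (cadd A (f m) (csmult A (-1) (f n))) < e) \<longrightarrow>
        (\<exists>l. \<forall>e>0. \<exists>N. \<forall>n\<ge>N. cnorm A (cadd A (f n) (csmult A (-1) l)) < e))"

definition star_automorphism :: "'a cstar_alg \<Rightarrow> ('a \<Rightarrow> 'a) \<Rightarrow> bool" where
  "star_automorphism A \<alpha> \<longleftrightarrow> bij \<alpha> \<and>
     (\<forall>a b. \<alpha> (cadd A a b) = cadd A (\<alpha> a) (\<alpha> b)) \<and>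
     (\<forall>k a. \<alpha> (csmult A k a) = csmult A k (\<alpha> a)) \<and>
     (\<forall>a b. \<alpha> (cmult A a b) = cmult A (\<alpha> a) (\<alpha> b)) \<and>
     (\<forall>a. \<alpha> (cstar A a) = cstar A (\<alpha> a))"

definition cstate :: "'a cstar_alg \<Rightarrow> ('a \<Rightarrow> complex) \<Rightarrow> bool" where
  "cstate A \<omega> \<longleftrightarrow>
     (\<forall>a b. \<omega> (cadd A a b) = \<omega> a + \<omega> b) \<and>
     (\<forall>k a. \<omega> (csmult A k a) = k * \<omega> a) \<and>
     (\<forall>a. Im (\<omega> (cmult A (cstar A a) a)) = 0 \<and> Re (\<omega> (cmult A (cstar A a) a)) \<ge> 0) \<and>
     Sup ((\<lambda>a. cmod (\<omega> a)) ` {a. cnorm A a \<le> 1}) = 1"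

definition cstar_dynamical_system :: "'a cstar_alg \<Rightarrow> ('a \<Rightarrow> 'a) \<Rightarrow> ('a \<Rightarrow> complex) \<Rightarrow> bool" where
  "cstar_dynamical_system A \<alpha> \<omega> \<longleftrightarrow>
     cstar_algebra A \<and> star_automorphism A \<alpha> \<and> cstate A \<omega> \<and> (\<forall>a. \<omega> (\<alpha> a) = \<omega> a)"

text \<open>A complex Hilbert space is represented as a real Hilbert space (type of class
  real_inner + complete_space) together with an orthogonal complex structure J
  (multiplication by the imaginary unit).\<close>

definition complex_structure :: "('h::real_inner \<Rightarrow> 'h) \<Rightarrow> bool" where
  "complex_structure J \<longleftrightarrow> bounded_linear J \<and> (\<forall>x. J (J x) = - x) \<and> (\<forall>x y. inner (J x) (J y) = inner x y)"

definition cscale :: "('h::real_inner \<Rightarrow> 'h) \<Rightarrow> complex \<Rightarrow> 'h \<Rightarrow> 'h" where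
  "cscale J z x = Re z *\<^sub>R x + Im z *\<^sub>R J x"

text \<open>Complex inner product, conjugate-linear in the first, linear in the second argument.\<close>
definition cinner :: "('h::real_inner \<Rightarrow> 'h) \<Rightarrow> 'h \<Rightarrow> 'h \<Rightarrow> complex" where
  "cinner J x y = Complex (inner x y) (- inner x (J y))"

definition cbounded :: "('h::real_inner \<Rightarrow> 'h) \<Rightarrow> ('h \<Rightarrow> 'h) \<Rightarrow> bool" where
  "cbounded J T \<longleftrightarrow> bounded_linear T \<and> (\<forall>x. T (J x) = J (T x))"

definition unitary_op :: "('h::real_inner \<Rightarrow> 'h) \<Rightarrow> ('h \<Rightarrow> 'h) \<Rightarrow> bool" where
  "unitary_op J U \<longleftrightarrow> cbounded J U \<and> surj U \<and> (\<forall>x. norm (U x) = norm x)"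

definition commutant :: "('h::real_inner \<Rightarrow> 'h) \<Rightarrow> ('h \<Rightarrow> 'h) set \<Rightarrow> ('h \<Rightarrow> 'h) set" where
  "commutant J S = {T. cbounded J T \<and> (\<forall>A\<in>S. T \<circ> A = A \<circ> T)}"

definition gns_covariant_rep ::
  "'a cstar_alg \<Rightarrow> ('a \<Rightarrow> 'a) \<Rightarrow> ('a \<Rightarrow> complex) \<Rightarrow>
   ('h::{real_inner,complete_space} \<Rightarrow> 'h) \<Rightarrow> ('a \<Rightarrow> 'h \<Rightarrow> 'h) \<Rightarrow> ('h \<Rightarrow> 'h) \<Rightarrow> 'h \<Rightarrow> bool" where
  "gns_covariant_rep A \<alpha> \<omega> J \<pi> U \<Omega> \<longleftrightarrow>
     complex_structure J \<and>
     \<comment> \<open>\<pi> is a *-representation by bounded operators\<close>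
     (\<forall>a. cbounded J (\<pi> a)) \<and>
     (\<forall>a b. \<pi> (cadd A a b) = (\<lambda>x. \<pi> a x + \<pi> b x)) \<and>
     (\<forall>k a. \<pi> (csmult A k a) = cscale J k \<circ> \<pi> a) \<and>
     (\<forall>a b. \<pi> (cmult A a b) = \<pi> a \<circ> \<pi> b) \<and>
     (\<forall>a. \<pi> (cstar A a) = adjoint (\<pi> a)) \<and>
     \<comment> \<open>GNS triple: \<Omega> cyclic and implements \<omega>\<close>
     closure (range (\<lambda>a. \<pi> a \<Omega>)) = UNIV \<and>
     (\<forall>a. \<omega> a = cinner J \<Omega> (\<pi> a \<Omega>)) \<and>
     \<comment> \<open>implementing unitary\<close>
     unitary_op J U \<and>
     (\<forall>a. U (\<pi> a \<Omega>) = \<pi> (\<alpha> a) \<Omega>)"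

definition eigenspace_U :: "('h::real_inner \<Rightarrow> 'h) \<Rightarrow> ('h \<Rightarrow> 'h) \<Rightarrow> complex \<Rightarrow> 'h set" where
  "eigenspace_U J U z = {x. U x = cscale J z x}"

definition point_spectrum :: "('h::real_inner \<Rightarrow> 'h) \<Rightarrow> ('h \<Rightarrow> 'h) \<Rightarrow> complex set" where
  "point_spectrum J U = {z. \<exists>x. x \<noteq> 0 \<and> U x = cscale J z x}"

definition spectral_subspace ::
  "('h::real_inner \<Rightarrow> 'h) \<Rightarrow> ('h \<Rightarrow> 'h) \<Rightarrow> ('h \<Rightarrow> 'h) set \<Rightarrow> complex \<Rightarrow> ('h \<Rightarrow> 'h) set" where
  "spectral_subspace J U X z = {T \<in> X. U \<circ> T \<circ> adjoint U = cscale J z \<circ> T}"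

end

theory Submission
  imports Defs
begin
lemma para_law:
  fixes a b :: "'h::real_inner"
  shows "(norm (a - b))^2 + (norm (a + b))^2 = 2 * (norm a)^2 + 2 * (norm b)^2"
  by (simp add: power2_norm_eq_inner inner_simps inner_commute)

lemma near_min:
  fixes a b :: "'h::real_inner"
  assumes "convex C" "a \<in> C" "b \<in> C" "\<forall>x\<in>C. c \<le> norm x" "norm a \<le> c + d" "norm b \<le> c + d" "0 \<le> c"
  shows "(norm (a - b))^2 \<le> 4 * ((c + d)^2 - c^2)"
proof -
  have m: "(1/2) *\<^sub>R a + (1/2) *\<^sub>R b \<in> C"
    using assms(1-3) by (intro convexD) auto
  have "c \<le> norm ((1/2) *\<^sub>R a + (1/2) *\<^sub>R b)" using m assms(4) by blast
  also have "(1/2) *\<^sub>R a + (1/2) *\<^sub>R b = (1/2) *\<^sub>R (a + b)" by (simp add: scaleR_right_distrib)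
  finally have "2 * c \<le> norm (a + b)" by simp
  hence s: "(2*c)^2 \<le> (norm (a+b))^2" using assms(7) by (intro power_mono) auto
  have "(norm a)^2 \<le> (c+d)^2" "(norm b)^2 \<le> (c+d)^2" using assms(5,6) by (auto intro!: power_mono)
  moreover have "(2*c)^2 = 4 * c^2" by (simp add: power_mult_distrib)
  ultimately show ?thesis using s para_law[of a b] by (smt (verit))
qed

lemma delta_exists:
  fixes c e :: real
  assumes "0 \<le> c" "0 < e"
  shows "\<exists>d>0. d \<le> 1 \<and> 4 * ((c + d)^2 - c^2) < e^2"
proof -
  define d where "d = min 1 (e^2 / (8 * (2*c+1)))"
  have dpos: "d > 0" using assms by (simp add: d_def)
  have d1: "d \<le> 1" by (simp add: d_def)
  have "(c + d)^2 - c^2 = d * (2*c + d)" by (simp add: power2_eq_square algebra_simps)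
  also have "\<dots> \<le> d * (2*c+1)" using dpos d1 by (intro mult_left_mono) auto
  also have "\<dots> \<le> e^2 / (8 * (2*c+1)) * (2*c+1)" using assms unfolding d_def by (intro mult_right_mono) auto
  also have "\<dots> = e^2/8"
  proof -
    have "2*c+1 > 0" using assms by simp
    thus ?thesis by (simp add: divide_simps)
  qed
  finally have "4 * ((c + d)^2 - c^2) \<le> e^2/2" by simp
  also have "\<dots> < e^2" using assms by simp
  finally show ?thesis using dpos d1 by blast
qed


lemma hilbert_closest:
  fixes x :: "'h::{real_inner,complete_space}"
  assumes "closed C" "convex C" "C \<noteq> {}"
  shows "\<exists>p\<in>C. \<forall>y\<in>C. norm (x - p) \<le> norm (x - y)"
proof -
  define D where "D = (\<lambda>y. x - y) ` C"
  have cD: "convex D" unfolding D_def convex_def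
  proof (clarify)
    fix y1 y2 and u v :: real assume "y1 \<in> C" "y2 \<in> C" "0 \<le> u" "0 \<le> v" "u + v = 1"
    hence "u *\<^sub>R y1 + v *\<^sub>R y2 \<in> C" using assms(2) by (intro convexD) auto
    moreover have "u *\<^sub>R (x - y1) + v *\<^sub>R (x - y2) = x - (u *\<^sub>R y1 + v *\<^sub>R y2)"
      using \<open>u+v=1\<close> by (simp add: algebra_simps flip: scaleR_add_left)
    ultimately show "u *\<^sub>R (x - y1) + v *\<^sub>R (x - y2) \<in> (\<lambda>y. x - y) ` C" by auto
  qed
  define c where "c = Inf (norm ` D)"
  have bdd: "bdd_below (norm ` D)" by (rule bdd_belowI[of _ 0]) auto
  have Dne: "D \<noteq> {}" using assms(3) by (simp add: D_def)
  have lower: "\<forall>y\<in>D. c \<le> norm y" unfolding c_def using bdd by (auto intro: cInf_lower)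
  have c0: "0 \<le> c" unfolding c_def using Dne by (auto intro!: cInf_greatest)
  have "\<forall>n. \<exists>y\<in>C. norm (x - y) < c + inverse (real (Suc n))"
  proof
    fix n
    have "Inf (norm ` D) < c + inverse (real (Suc n))" unfolding c_def by simp
    then obtain w where "w \<in> D" "norm w < c + inverse (real (Suc n))"
      using cInf_less_iff[of "norm ` D"] Dne bdd by auto
    thus "\<exists>y\<in>C. norm (x - y) < c + inverse (real (Suc n))" unfolding D_def by auto
  qed
  then obtain s where sC: "\<And>n. s n \<in> C" and sn: "\<And>n. norm (x - s n) < c + inverse (real (Suc n))"
    by metis
  have inD: "\<And>n. x - s n \<in> D" using sC by (simp add: D_def)
  have "Cauchy s"
    unfolding Cauchy_def
  proof (intro allI impI)
    fix e :: real assume "0 < e"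
    obtain d where d: "d > 0" "4 * ((c + d)^2 - c^2) < e^2" using delta_exists[OF c0 \<open>0<e\<close>] by auto
    obtain N where N: "N > 0" "inverse (real N) < d" using ex_inverse_of_nat_less[OF d(1)] by auto
    have b: "norm (x - s n) \<le> c + d" if "n \<ge> N" for n
    proof -
      have "inverse (real (Suc n)) \<le> inverse (real N)" using that N(1) by (simp add: field_simps)
      thus ?thesis using sn[of n] N by linarith
    qed
    show "\<exists>M. \<forall>m\<ge>M. \<forall>n\<ge>M. dist (s m) (s n) < e"
    proof (intro exI allI impI)
      fix m n assume "N \<le> m" "N \<le> n"
      have "(norm ((x - s n) - (x - s m)))^2 \<le> 4 * ((c + d)^2 - c^2)"
        using near_min[OF cD inD inD lower b b c0] \<open>N \<le> m\<close> \<open>N \<le> n\<close> by blast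
      also have "(x - s n) - (x - s m) = s m - s n" by simp
      finally have "(norm (s m - s n))^2 < e^2" using d by linarith
      thus "dist (s m) (s n) < e" using \<open>0<e\<close> by (simp add: dist_norm power2_less_imp_less)
    qed
  qed
  then obtain p where sp: "s \<longlonglongrightarrow> p" using Cauchy_convergent_iff convergent_def by blast
  have pC: "p \<in> C" using closed_sequentially[OF assms(1) sC sp] .
  have l1: "(\<lambda>n. norm (x - s n)) \<longlonglongrightarrow> norm (x - p)" by (intro tendsto_intros sp)
  have l2: "(\<lambda>n. c + inverse (real (Suc n))) \<longlonglongrightarrow> c + 0" by (intro tendsto_intros LIMSEQ_inverse_real_of_nat)
  have "norm (x - p) \<le> c + 0" using LIMSEQ_le[OF l1 l2] sn less_imp_le by blast
  hence "\<forall>y\<in>C. norm (x - p) \<le> norm (x - y)" using lower unfolding D_def by force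
  thus ?thesis using pC by blast
qed

lemma closest_orth:
  fixes x :: "'h::real_inner"
  assumes "subspace K" "p \<in> K" "\<forall>y\<in>K. norm (x - p) \<le> norm (x - y)" "k \<in> K"
  shows "inner (x - p) k = 0"
proof (cases "k = 0")
  case True thus ?thesis by simp
next
  case False
  define u where "u = x - p"
  define a where "a = inner u k"
  define n where "n = inner k k"
  have npos: "n > 0" using False by (simp add: n_def)
  define t where "t = a / n"
  have "p + t *\<^sub>R k \<in> K" using assms by (simp add: subspace_add subspace_scale)
  hence "norm u \<le> norm (u - t *\<^sub>R k)" using assms(3) unfolding u_def by (metis diff_diff_eq)
  hence "(norm u)^2 \<le> (norm (u - t *\<^sub>R k))^2" by (simp add: power_mono)
  also have "(norm (u - t *\<^sub>R k))^2 = (norm u)^2 - 2*t*a + t*t*n"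
    by (simp add: power2_norm_eq_inner inner_diff_left inner_diff_right inner_commute[of k u] a_def n_def algebra_simps)
  finally have "0 \<le> t * t * n - 2*t*a" by simp
  also have "t * t * n - 2*t*a = - (a*a/n)" using npos by (simp add: t_def field_simps)
  finally have "a * a / n \<le> 0" by simp
  hence "a * a \<le> 0" using npos by (auto simp: divide_le_0_iff)
  hence "a = 0" by (metis mult_eq_0_iff not_square_less_zero order.antisym zero_le_square)
  thus ?thesis by (simp add: a_def u_def)
qed

lemma riesz:
  fixes f :: "'h::{real_inner,complete_space} \<Rightarrow> real"
  assumes "bounded_linear f"
  shows "\<exists>u. \<forall>x. f x = inner u x"
proof (cases "\<forall>x. f x = 0")
  case True thus ?thesis by (intro exI[of _ 0]) simp
next
  case False
  then obtain x0 where x0: "f x0 \<noteq> 0" by blast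
  interpret bounded_linear f by fact
  define K where "K = {x. f x = 0}"
  have sK: "subspace K" unfolding K_def subspace_def by (simp add: add scale zero)
  have cK: "closed K" unfolding K_def
    by (intro closed_Collect_eq continuous_on_const linear_continuous_on assms)
  obtain p where pK: "p \<in> K" and pmin: "\<forall>y\<in>K. norm (x0 - p) \<le> norm (x0 - y)"
    using hilbert_closest[OF cK subspace_imp_convex[OF sK], of x0] sK by (auto simp: subspace_def)
  define v where "v = x0 - p"
  have orth: "\<And>k. k \<in> K \<Longrightarrow> inner v k = 0" unfolding v_def using closest_orth[OF sK pK pmin] by blast
  have fv: "f v = f x0" using pK by (simp add: v_def diff K_def)
  have vv: "inner v v \<noteq> 0" using fv x0 by auto
  define u where "u = (f v / inner v v) *\<^sub>R v"
  have "f x = inner u x" for x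
  proof -
    have "x - (f x / f v) *\<^sub>R v \<in> K" using fv x0 by (simp add: K_def diff scale)
    hence "inner v (x - (f x / f v) *\<^sub>R v) = 0" by (rule orth)
    hence "inner v x = (f x / f v) * inner v v" by (simp add: inner_diff_right)
    thus ?thesis using vv fv x0 by (simp add: u_def)
  qed
  thus ?thesis by blast
qed

lemma adjoint_ex:
  fixes T :: "'h::{real_inner,complete_space} \<Rightarrow> 'h"
  assumes "bounded_linear T"
  shows "\<exists>S. \<forall>x y. inner (T x) y = inner x (S y)"
proof -
  have "\<forall>y. \<exists>u. \<forall>x. inner (T x) y = inner u x"
  proof
    fix y
    have "bounded_linear (\<lambda>x. inner (T x) y)"
      using bounded_linear_compose[OF bounded_linear_inner_left assms] .
    thus "\<exists>u. \<forall>x. inner (T x) y = inner u x" by (rule riesz)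
  qed
  then obtain S where "\<forall>y x. inner (T x) y = inner (S y) x" by metis
  thus ?thesis by (metis inner_commute)
qed

lemma adj_inner:
  fixes T :: "'h::{real_inner,complete_space} \<Rightarrow> 'h"
  assumes "bounded_linear T"
  shows "inner (T x) y = inner x (adjoint T y)"
proof -
  obtain S where S: "\<forall>x y. inner (T x) y = inner x (S y)" using adjoint_ex[OF assms] by blast
  hence "adjoint T = S" by (rule adjoint_unique)
  thus ?thesis using S by simp
qed

lemma adj_inner2:
  fixes T :: "'h::{real_inner,complete_space} \<Rightarrow> 'h"
  assumes "bounded_linear T"
  shows "inner (adjoint T y) x = inner y (T x)"
  using adj_inner[OF assms, of x y] by (simp add: inner_commute)

lemma adjoint_bl:
  fixes T :: "'h::{real_inner,complete_space} \<Rightarrow> 'h"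
  assumes "bounded_linear T"
  shows "bounded_linear (adjoint T)"
proof -
  interpret bounded_linear T by fact
  obtain K where K: "K > 0" "\<And>x. norm (T x) \<le> norm x * K" using pos_bounded by blast
  show ?thesis
  proof (rule bounded_linear_intro[where K=K])
    fix a b
    show "adjoint T (a + b) = adjoint T a + adjoint T b"
      by (rule vector_eq_ldot[THEN iffD1], simp add: adj_inner[OF assms, symmetric] inner_add_right)
  next
    fix r a
    show "adjoint T (r *\<^sub>R a) = r *\<^sub>R adjoint T a"
      by (rule vector_eq_ldot[THEN iffD1], simp add: adj_inner[OF assms, symmetric])
  next
    fix y
    define w where "w = adjoint T y"
    have "(norm w)^2 = inner (T w) y" by (simp add: adj_inner[OF assms] w_def power2_norm_eq_inner)
    also have "\<dots> \<le> norm (T w) * norm y" by (rule norm_cauchy_schwarz)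
    also have "\<dots> \<le> norm w * K * norm y" by (intro mult_right_mono K(2)) auto
    finally have "norm w * norm w \<le> norm w * (norm y * K)" by (simp add: power2_eq_square algebra_simps)
    moreover have "0 \<le> norm y * K" using K(1) by simp
    ultimately have "norm w \<le> norm y * K"
      by (cases "norm w = 0") auto
    thus "norm (adjoint T y) \<le> norm y * K" by (simp add: w_def)
  qed
qed

lemma adjoint_adjoint_bl:
  fixes T :: "'h::{real_inner,complete_space} \<Rightarrow> 'h"
  assumes "bounded_linear T"
  shows "adjoint (adjoint T) = T"
  by (rule adjoint_unique) (simp add: adj_inner2[OF assms])

lemma adjoint_comp:
  fixes A B :: "'h::{real_inner,complete_space} \<Rightarrow> 'h"
  assumes "bounded_linear A" "bounded_linear B"
  shows "adjoint (A \<circ> B) = adjoint B \<circ> adjoint A"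
  by (rule adjoint_unique) (simp add: adj_inner[OF assms(1)] adj_inner[OF assms(2)])

context
  fixes J :: "'h::{real_inner,complete_space} \<Rightarrow> 'h"
  assumes cs: "complex_structure J"
begin

lemma cs_bl: "bounded_linear J" using cs by (simp add: complex_structure_def)
lemma cs_JJ[simp]: "J (J x) = - x" using cs by (simp add: complex_structure_def)
lemma cs_orth: "inner (J x) (J y) = inner x y" using cs by (simp add: complex_structure_def)

interpretation J: bounded_linear J by (rule cs_bl)

lemma cs_inner: "inner (J x) y = - inner x (J y)"
proof -
  have "inner (J x) y = inner (J (J x)) (J y)" by (rule cs_orth[symmetric])
  thus ?thesis by simp
qed

lemma cs_inner_self[simp]: "inner x (J x) = 0"
  using cs_inner[of x x] by (simp add: inner_commute)

lemma cs_norm[simp]: "norm (J x) = norm x"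
  by (simp add: norm_eq_sqrt_inner cs_orth)

lemma cs_adj: "adjoint J = (\<lambda>y. - J y)"
  by (rule adjoint_unique) (metis cs_inner inner_minus_right)

lemma cscale_eq: "cscale J z = (\<lambda>x. Re z *\<^sub>R x + Im z *\<^sub>R J x)"
  by (simp add: cscale_def fun_eq_iff)

lemma cscale_bl: "bounded_linear (cscale J z)"
  unfolding cscale_eq
  by (intro bounded_linear_add bounded_linear_scaleR_right bounded_linear_ident
      bounded_linear_compose[OF bounded_linear_scaleR_right cs_bl])

interpretation CS: bounded_linear "cscale J z" for z by (rule cscale_bl)

lemma cscale_mult: "cscale J z (cscale J w x) = cscale J (z * w) x"
  by (simp add: cscale_def J.add J.scale algebra_simps)

lemma cscale_one[simp]: "cscale J 1 x = x"
  by (simp add: cscale_def)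

lemma cscale_J: "J (cscale J z x) = cscale J z (J x)"
  by (simp add: cscale_def J.add J.scale algebra_simps)

lemma cbounded_cscale_comm:
  assumes "cbounded J T" shows "T (cscale J z x) = cscale J z (T x)"
proof -
  interpret T: bounded_linear T using assms by (simp add: cbounded_def)
  show ?thesis using assms by (simp add: cbounded_def cscale_def T.add T.scale)
qed

lemma cscale_norm: "norm (cscale J z x) = cmod z * norm x"
proof -
  have "inner (cscale J z x) (cscale J z x) = ((Re z)^2 + (Im z)^2) * inner x x"
    by (simp add: cscale_def inner_add_left inner_add_right
        cs_orth inner_commute[of "J x" x] algebra_simps power2_eq_square)
  hence "(norm (cscale J z x))^2 = ((Re z)^2 + (Im z)^2) * (norm x)^2"
    by (simp only: power2_norm_eq_inner)
  also have "(Re z)^2 + (Im z)^2 = (cmod z)^2" by (simp add: cmod_def)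
  finally have "(norm (cscale J z x))^2 = (cmod z * norm x)^2" by (simp add: power_mult_distrib)
  thus ?thesis by (simp add: power2_eq_iff_nonneg)
qed

lemma cscale_inner: "inner (cscale J z x) y = inner x (cscale J (cnj z) y)"
  by (simp add: cscale_def inner_add_left inner_add_right inner_diff_right cs_inner)

lemma cscale_adj: "adjoint (cscale J z) = cscale J (cnj z)"
  by (rule adjoint_unique) (simp add: cscale_inner)

lemma cbounded_cscale: "cbounded J (cscale J z)"
  by (simp add: cbounded_def cscale_bl cscale_J)

lemma cbounded_id: "cbounded J id" "cbounded J (\<lambda>x. x)"
  by (simp_all add: cbounded_def bounded_linear_ident id_def)

lemma cbounded_comp: "cbounded J A \<Longrightarrow> cbounded J B \<Longrightarrow> cbounded J (A \<circ> B)"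
  by (auto simp: cbounded_def comp_def intro: bounded_linear_compose)

lemma cbounded_adjoint:
  assumes "cbounded J T" shows "cbounded J (adjoint T)"
proof -
  have blT: "bounded_linear T" using assms by (simp add: cbounded_def)
  have "T \<circ> J = J \<circ> T" using assms by (simp add: cbounded_def fun_eq_iff)
  hence "adjoint (T \<circ> J) = adjoint (J \<circ> T)" by simp
  hence "adjoint J \<circ> adjoint T = adjoint T \<circ> adjoint J"
    by (simp add: adjoint_comp[OF blT cs_bl] adjoint_comp[OF cs_bl blT])
  hence e: "\<And>x. - J (adjoint T x) = adjoint T (- J x)" by (simp add: cs_adj fun_eq_iff)
  interpret A: bounded_linear "adjoint T" by (rule adjoint_bl[OF blT])
  show ?thesis using e by (simp add: cbounded_def adjoint_bl[OF blT] A.neg)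
qed

end

lemma subspace_closure_hs:
  fixes S :: "'h::real_normed_vector set"
  assumes "subspace S" shows "subspace (closure S)"
  unfolding subspace_def
proof (intro conjI ballI allI)
  show "0 \<in> closure S" using assms closure_subset subspace_0 by blast
next
  fix x y assume "x \<in> closure S" "y \<in> closure S"
  then obtain a b where "\<forall>n. a n \<in> S" "a \<longlonglongrightarrow> x" "\<forall>n. b n \<in> S" "b \<longlonglongrightarrow> y"
    by (auto simp: closure_sequential)
  thus "x + y \<in> closure S" unfolding closure_sequential
    by (intro exI[of _ "\<lambda>n. a n + b n"]) (auto intro: tendsto_add subspace_add[OF assms])
next
  fix c :: real and x assume "x \<in> closure S"
  then obtain a where "\<forall>n. a n \<in> S" "a \<longlonglongrightarrow> x"
    by (auto simp: closure_sequential)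
  thus "c *\<^sub>R x \<in> closure S" unfolding closure_sequential
    by (intro exI[of _ "\<lambda>n. c *\<^sub>R a n"]) (auto intro: tendsto_scaleR subspace_scale[OF assms])
qed

lemma tri3:
  fixes a b c d :: "'a::real_normed_vector"
  shows "norm (a - d) \<le> norm (a - b) + norm (b - c) + norm (c - d)"
proof -
  have "a - d = ((a - b) + (b - c)) + (c - d)" by simp
  hence "norm (a - d) = norm (((a - b) + (b - c)) + (c - d))" by simp
  thus ?thesis using norm_triangle_ineq[of "(a-b)+(b-c)" "c-d"] norm_triangle_ineq[of "a-b" "b-c"] by linarith
qed

definition avg :: "('h::real_vector \<Rightarrow> 'h) \<Rightarrow> nat \<Rightarrow> 'h \<Rightarrow> 'h" where
  "avg V N v = (1 / real N) *\<^sub>R (\<Sum>n<N. (V ^^ n) v)"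

lemma linear_funpow: "linear (V::'h::real_vector \<Rightarrow> 'h) \<Longrightarrow> linear (V ^^ n)"
proof (induction n)
  case 0 show ?case using linear_id by (simp add: id_def)
next
  case (Suc n) show ?case using linear_compose[OF Suc.IH[OF Suc.prems] Suc.prems] by (simp add: comp_def)
qed

lemma norm_funpow_le:
  fixes V :: "'h::real_normed_vector \<Rightarrow> 'h"
  assumes "\<And>x. norm (V x) \<le> norm x"
  shows "norm ((V ^^ n) x) \<le> norm (x::'h::real_normed_vector)"
proof (induction n)
  case 0 show ?case by simp
next
  case (Suc n) show ?case using assms[of "(V ^^ n) x"] Suc.IH by simp
qed

lemma avg_add:
  fixes V :: "'h::real_vector \<Rightarrow> 'h"
  assumes "linear V" shows "avg V N (a + b) = avg V N a + avg V N b"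
  using linear_funpow[OF assms]
  by (simp add: avg_def linear_add sum.distrib scaleR_right_distrib)

lemma avg_scale:
  fixes V :: "'h::real_vector \<Rightarrow> 'h"
  assumes "linear V" shows "avg V N (r *\<^sub>R a) = r *\<^sub>R avg V N a"
  using linear_funpow[OF assms]
  by (simp add: avg_def linear_scale scaleR_sum_right)

lemma avg_diff:
  fixes V :: "'h::real_vector \<Rightarrow> 'h"
  assumes "linear V" shows "avg V N (a - b) = avg V N a - avg V N b"
  using linear_funpow[OF assms]
  by (simp add: avg_def linear_diff sum_subtractf scaleR_diff_right)

lemma avg_shift:
  fixes V :: "'h::real_vector \<Rightarrow> 'h"
  shows "avg V N (V x) - avg V N x = (1 / real N) *\<^sub>R ((V ^^ N) x - x)"
proof -
  have "(\<Sum>n<N. (V ^^ n) (V x)) - (\<Sum>n<N. (V ^^ n) x) = (\<Sum>n<N. (V ^^ Suc n) x - (V ^^ n) x)"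
    by (simp add: sum_subtractf funpow_Suc_right del: funpow.simps)
  also have "\<dots> = (V ^^ N) x - x" by (subst sum_lessThan_telescope) simp
  finally show ?thesis by (simp add: avg_def flip: scaleR_diff_right)
qed

lemma avg_shift_tendsto:
  fixes V :: "'h::real_normed_vector \<Rightarrow> 'h"
  assumes "\<And>x. norm (V x) \<le> norm x"
  shows "(\<lambda>N. avg V N (V x) - avg V N x) \<longlonglongrightarrow> 0"
proof (rule Lim_null_comparison)
  show "\<forall>\<^sub>F N in sequentially. norm (avg V N (V x) - avg V N x) \<le> (2 * norm x) / real N"
  proof (rule always_eventually, rule allI)
    fix N
    have "norm ((V ^^ N) x - x) \<le> 2 * norm x"
      using norm_triangle_ineq4[of "(V ^^ N) x" x] norm_funpow_le[OF assms, of N x] by linarith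
    hence "norm ((1 / real N) *\<^sub>R ((V ^^ N) x - x)) \<le> (1 / real N) * (2 * norm x)"
      by (simp add: mult_left_mono divide_le_cancel)
    thus "norm (avg V N (V x) - avg V N x) \<le> (2 * norm x) / real N" by (simp add: avg_shift)
  qed
  show "(\<lambda>N. (2 * norm x) / real N) \<longlonglongrightarrow> 0" by (rule lim_const_over_n)
qed

lemma avg_norm_le:
  fixes V :: "'h::real_normed_vector \<Rightarrow> 'h"
  assumes "\<And>x. norm (V x) \<le> norm x"
  shows "norm (avg V N w) \<le> norm w"
proof (cases "N = 0")
  case True thus ?thesis by (simp add: avg_def)
next
  case False
  have "norm (\<Sum>n<N. (V ^^ n) w) \<le> (\<Sum>n<N. norm ((V ^^ n) w))" by (rule norm_sum)
  also have "\<dots> \<le> (\<Sum>n<N. norm w)" by (intro sum_mono norm_funpow_le assms)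
  finally have "norm (\<Sum>n<N. (V ^^ n) w) \<le> real N * norm w" by simp
  thus ?thesis using False by (simp add: avg_def field_simps)
qed

lemma mean_ergodic:
  fixes V :: "'h::{real_inner,complete_space} \<Rightarrow> 'h"
  assumes lin: "linear V" and nV: "\<And>x. norm (V x) \<le> norm x"
  shows "convergent (\<lambda>N. avg V N v)"
proof -
  define C where "C = convex hull (range (\<lambda>n. (V ^^ n) v))"
  have cC: "convex C" by (simp add: C_def)
  have vC: "v \<in> C" unfolding C_def by (rule hull_inc) (metis funpow_0 rangeI)
  have VC: "V ` C \<subseteq> C"
  proof -
    have "V ` C = convex hull (V ` range (\<lambda>n. (V ^^ n) v))"
      unfolding C_def by (rule convex_hull_linear_image[OF lin])
    also have "V ` range (\<lambda>n. (V ^^ n) v) \<subseteq> range (\<lambda>n. (V ^^ n) v)"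
    proof
      fix y assume "y \<in> V ` range (\<lambda>n. (V ^^ n) v)"
      then obtain n where "y = V ((V ^^ n) v)" by auto
      hence "y = (V ^^ Suc n) v" by simp
      thus "y \<in> range (\<lambda>n. (V ^^ n) v)" by blast
    qed
    hence "convex hull (V ` range (\<lambda>n. (V ^^ n) v)) \<subseteq> C" unfolding C_def by (rule hull_mono)
    finally show ?thesis .
  qed
  have VnC: "(V ^^ n) w \<in> C" if "w \<in> C" for n w
    using that by (induction n) (use VC in auto)
  have avgC: "avg V N w \<in> C" if "w \<in> C" "N > 0" for N w
  proof -
    have "avg V N w = (\<Sum>n<N. (1 / real N) *\<^sub>R (V ^^ n) w)" by (simp add: avg_def scaleR_sum_right)
    also have "\<dots> \<in> C"
      using convex_sum[OF _ cC, of "{..<N}" "\<lambda>_. 1 / real N" "\<lambda>n. (V ^^ n) w"] that VnC by simp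
    finally show ?thesis .
  qed
  define P where "P = {w. (\<lambda>N. avg V N w - avg V N v) \<longlonglongrightarrow> 0}"
  have orbP: "(V ^^ k) v \<in> P" for k
  proof (induction k)
    case 0 thus ?case by (simp add: P_def)
  next
    case (Suc k)
    have "(\<lambda>N. (avg V N (V ((V ^^ k) v)) - avg V N ((V ^^ k) v)) + (avg V N ((V ^^ k) v) - avg V N v)) \<longlonglongrightarrow> 0 + 0"
      using Suc avg_shift_tendsto[OF nV] unfolding P_def by (intro tendsto_add) auto
    thus ?case by (simp add: P_def)
  qed
  have cP: "convex P"
  proof (rule convexI)
    fix a b and u t :: real assume ab: "a \<in> P" "b \<in> P" and "0 \<le> u" "0 \<le> t" "u + t = 1"
    hence ut: "0 \<le> u \<and> 0 \<le> t \<and> u + t = 1" by simp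
    have "(\<lambda>N. u *\<^sub>R (avg V N a - avg V N v) + t *\<^sub>R (avg V N b - avg V N v)) \<longlonglongrightarrow> u *\<^sub>R 0 + t *\<^sub>R 0"
      using ab unfolding P_def by (intro tendsto_intros) auto
    moreover have "u *\<^sub>R (avg V N a - avg V N v) + t *\<^sub>R (avg V N b - avg V N v) = avg V N (u *\<^sub>R a + t *\<^sub>R b) - avg V N v" for N
    proof -
      have "avg V N v = (u + t) *\<^sub>R avg V N v" using ut by simp
      thus ?thesis by (simp add: avg_add[OF lin] avg_scale[OF lin] algebra_simps)
    qed
    ultimately show "u *\<^sub>R a + t *\<^sub>R b \<in> P" by (simp add: P_def)
  qed
  have CP: "C \<subseteq> P" unfolding C_def by (rule hull_minimal) (use orbP cP in auto)
  define c where "c = Inf (norm ` C)"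
  have bdd: "bdd_below (norm ` C)" by (rule bdd_belowI[of _ 0]) auto
  have Cne: "C \<noteq> {}" using vC by blast
  have lower: "\<forall>y\<in>C. c \<le> norm y" unfolding c_def using bdd by (auto intro: cInf_lower)
  have c0: "0 \<le> c" unfolding c_def using Cne by (auto intro!: cInf_greatest)
  have "Cauchy (\<lambda>N. avg V N v)"
    unfolding Cauchy_def
  proof (intro allI impI)
    fix e :: real assume "0 < e"
    hence e3: "0 < e / 3" by simp
    obtain d where d: "d > 0" "4 * ((c + d)^2 - c^2) < (e/3)^2" using delta_exists[OF c0 e3] by auto
    have "Inf (norm ` C) < c + d" unfolding c_def using d by simp
    then obtain w where wC: "w \<in> C" and nw: "norm w < c + d"
      using cInf_less_iff[of "norm ` C"] Cne bdd by auto
    have lim: "(\<lambda>N. avg V N w - avg V N v) \<longlonglongrightarrow> 0" using CP wC by (auto simp: P_def)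
    obtain N1 where "\<forall>N\<ge>N1. norm ((avg V N w - avg V N v) - 0) < e / 3"
      using LIMSEQ_iff[THEN iffD1, OF lim, rule_format, OF e3] by blast
    hence N1: "\<And>N. N \<ge> N1 \<Longrightarrow> norm (avg V N w - avg V N v) < e / 3" by simp
    show "\<exists>M. \<forall>m\<ge>M. \<forall>n\<ge>M. dist (avg V m v) (avg V n v) < e"
    proof (intro exI[of _ "max N1 1"] allI impI)
      fix m n assume mn: "max N1 1 \<le> m" "max N1 1 \<le> n"
      have m0: "m > 0" "n > 0" "m \<ge> N1" "n \<ge> N1" using mn by simp_all
      have am: "avg V m w \<in> C" "norm (avg V m w) \<le> c + d"
        using avgC[OF wC m0(1)] avg_norm_le[OF nV, of m w] nw by simp_all
      have an: "avg V n w \<in> C" "norm (avg V n w) \<le> c + d"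
        using avgC[OF wC m0(2)] avg_norm_le[OF nV, of n w] nw by simp_all
      have "(norm (avg V m w - avg V n w))^2 < (e/3)^2"
        by (rule le_less_trans[OF near_min[OF cC am(1) an(1) lower am(2) an(2) c0] d(2)])
      hence mid: "norm (avg V m w - avg V n w) < e / 3"
        by (rule power2_less_imp_less) (use e3 in simp)
      have "dist (avg V m v) (avg V n v) \<le> norm (avg V m w - avg V m v) + norm (avg V m w - avg V n w) + norm (avg V n w - avg V n v)"
        using tri3[where a="avg V m v" and b="avg V m w" and c="avg V n w" and d="avg V n v"]
          dist_norm[of "avg V m v" "avg V n v"] norm_minus_commute[of "avg V m v" "avg V m w"]
        by linarith
      also have "\<dots> < e / 3 + e / 3 + e / 3" using N1[OF m0(3)] N1[OF m0(4)] mid by linarith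
      finally show "dist (avg V m v) (avg V n v) < e" by simp
    qed
  qed
  thus ?thesis by (simp add: Cauchy_convergent_iff)
qed

lemma strong_limit_ext:
  fixes Tn :: "nat \<Rightarrow> 'h::{real_normed_vector,complete_space} \<Rightarrow> 'h"
  assumes lin: "\<And>n. linear (Tn n)" and bnd: "\<And>n y. norm (Tn n y) \<le> K * norm y" and K: "K \<ge> 0"
    and dense: "closure D = UNIV" and conv: "\<And>d. d \<in> D \<Longrightarrow> convergent (\<lambda>n. Tn n d)"
  shows "convergent (\<lambda>n. Tn n y)"
proof -
  have "Cauchy (\<lambda>n. Tn n y)"
    unfolding Cauchy_def
  proof (intro allI impI)
    fix e :: real assume "0 < e"
    define r where "r = e / (3 * (K + 1))"
    have r: "r > 0" using \<open>0 < e\<close> K by (simp add: r_def)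
    obtain d where dD: "d \<in> D" and dy: "dist d y < r"
      using dense r closure_approachable[of y D] by auto
    have "Cauchy (\<lambda>n. Tn n d)" using conv[OF dD] by (simp add: Cauchy_convergent_iff)
    then obtain N where N: "\<And>m n. m \<ge> N \<Longrightarrow> n \<ge> N \<Longrightarrow> dist (Tn m d) (Tn n d) < e / 3"
      unfolding Cauchy_def using \<open>0 < e\<close> by (metis divide_pos_pos zero_less_numeral)
    have small: "norm (Tn n y - Tn n d) < e / 3" for n
    proof -
      have "norm (Tn n y - Tn n d) = norm (Tn n (y - d))" using lin by (simp add: linear_diff)
      also have "\<dots> \<le> K * norm (y - d)" by (rule bnd)
      also have "\<dots> \<le> K * r" using dy K by (intro mult_left_mono) (auto simp: dist_norm norm_minus_commute)
      also have "\<dots> < e / 3"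
      proof -
        have "K * r = e / 3 * (K / (K + 1))" using K by (simp add: r_def field_simps)
        also have "\<dots> < e / 3 * 1" using K \<open>0<e\<close> by (intro mult_strict_left_mono) auto
        finally show ?thesis by simp
      qed
      finally show ?thesis .
    qed
    show "\<exists>M. \<forall>m\<ge>M. \<forall>n\<ge>M. dist (Tn m y) (Tn n y) < e"
    proof (intro exI[of _ N] allI impI)
      fix m n assume "N \<le> m" "N \<le> n"
      have "dist (Tn m y) (Tn n y) \<le> norm (Tn m y - Tn m d) + dist (Tn m d) (Tn n d) + norm (Tn n y - Tn n d)"
        using tri3[where a="Tn m y" and b="Tn m d" and c="Tn n d" and d="Tn n y"]
        by (simp add: dist_norm norm_minus_commute[of "Tn n d"])
      also have "\<dots> < e/3 + e/3 + e/3" using small N \<open>N \<le> m\<close> \<open>N \<le> n\<close> by (intro add_strict_mono) auto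
      finally show "dist (Tn m y) (Tn n y) < e" by simp
    qed
  qed
  thus ?thesis by (simp add: Cauchy_convergent_iff)
qed

definition starc :: "('h::real_inner \<Rightarrow> 'h) set \<Rightarrow> bool" where
  "starc S \<longleftrightarrow> (\<forall>T\<in>S. adjoint T \<in> S)"

lemma comm_cb: "T \<in> commutant J S \<Longrightarrow> cbounded J T"
  by (simp add: commutant_def)

lemma comm_ap: "T \<in> commutant J S \<Longrightarrow> R \<in> S \<Longrightarrow> T (R x) = R (T x)"
  by (auto simp: commutant_def fun_eq_iff)

lemma comm_anti: "S \<subseteq> S' \<Longrightarrow> commutant J S' \<subseteq> commutant J S"
  by (auto simp: commutant_def)

lemma double_incl: "\<forall>R\<in>S. cbounded J R \<Longrightarrow> S \<subseteq> commutant J (commutant J S)"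
  by (auto simp: commutant_def)

lemma triple_comm:
  assumes "\<forall>R\<in>S. cbounded J R"
  shows "commutant J (commutant J (commutant J S)) = commutant J S"
proof
  show "commutant J (commutant J (commutant J S)) \<subseteq> commutant J S"
    by (rule comm_anti[OF double_incl[OF assms]])
  show "commutant J S \<subseteq> commutant J (commutant J (commutant J S))"
    by (rule double_incl) (auto simp: commutant_def)
qed

lemma comm_id: "(\<lambda>x. x) \<in> commutant J S"
  by (simp add: commutant_def cbounded_def bounded_linear_ident comp_def)

lemma comm_comp: "A \<in> commutant J S \<Longrightarrow> B \<in> commutant J S \<Longrightarrow> (\<lambda>x. A (B x)) \<in> commutant J S"
  by (auto simp: commutant_def cbounded_def fun_eq_iff intro: bounded_linear_compose)

context
  fixes J :: "'h::{real_inner,complete_space} \<Rightarrow> 'h"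
  assumes cs: "complex_structure J"
begin

interpretation J: bounded_linear J by (rule cs_bl[OF cs])

lemma comm_add:
  assumes "\<forall>R\<in>S. cbounded J R" "A \<in> commutant J S" "B \<in> commutant J S"
  shows "(\<lambda>x. A x + B x) \<in> commutant J S"
proof -
  have "cbounded J (\<lambda>x. A x + B x)"
    using comm_cb[OF assms(2)] comm_cb[OF assms(3)] J.add
    by (auto simp: cbounded_def intro: bounded_linear_add)
  moreover have "R (A x + B x) = A (R x) + B (R x)" if "R \<in> S" for R x
  proof -
    interpret R: bounded_linear R using assms(1) that by (simp add: cbounded_def)
    show ?thesis using comm_ap[OF assms(2) that] comm_ap[OF assms(3) that] by (simp add: R.add)
  qed
  ultimately show ?thesis by (auto simp: commutant_def fun_eq_iff)
qed

lemma comm_scale: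
  assumes "\<forall>R\<in>S. cbounded J R" "A \<in> commutant J S"
  shows "(\<lambda>x. r *\<^sub>R A x) \<in> commutant J S"
proof -
  have "cbounded J (\<lambda>x. r *\<^sub>R A x)"
    using comm_cb[OF assms(2)] J.scale
    by (auto simp: cbounded_def intro: bounded_linear_compose[OF bounded_linear_scaleR_right])
  moreover have "R (r *\<^sub>R A x) = r *\<^sub>R A (R x)" if "R \<in> S" for R x
  proof -
    interpret R: bounded_linear R using assms(1) that by (simp add: cbounded_def)
    show ?thesis using comm_ap[OF assms(2) that] by (simp add: R.scale)
  qed
  ultimately show ?thesis by (auto simp: commutant_def fun_eq_iff)
qed

lemma comm_zero:
  assumes "\<forall>R\<in>S. cbounded J R"
  shows "(\<lambda>x. 0) \<in> commutant J S"
proof -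
  have "R 0 = 0" if "R \<in> S" for R
  proof -
    interpret R: bounded_linear R using assms(1) that by (simp add: cbounded_def)
    show ?thesis by (rule R.zero)
  qed
  thus ?thesis by (auto simp: commutant_def cbounded_def fun_eq_iff bounded_linear_zero J.zero)
qed

lemma comm_J:
  assumes "\<forall>R\<in>S. cbounded J R"
  shows "J \<in> commutant J S"
  using assms cs_bl[OF cs] by (auto simp: commutant_def cbounded_def fun_eq_iff)

lemma comm_star:
  assumes "\<forall>R\<in>S. bounded_linear R" "starc S"
  shows "starc (commutant J S)"
  unfolding starc_def
proof
  fix T assume T: "T \<in> commutant J S"
  have cT: "cbounded J T" using T by (simp add: commutant_def)
  hence blT: "bounded_linear T" by (simp add: cbounded_def)
  have "adjoint T \<circ> R = R \<circ> adjoint T" if R: "R \<in> S" for R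
  proof -
    have blR: "bounded_linear R" using assms(1) R by blast
    have aR: "adjoint R \<in> S" using assms(2) R by (simp add: starc_def)
    have "T \<circ> adjoint R = adjoint R \<circ> T" using T aR by (simp add: commutant_def)
    hence "adjoint (T \<circ> adjoint R) = adjoint (adjoint R \<circ> T)" by simp
    thus ?thesis
      by (simp add: adjoint_comp[OF blT adjoint_bl[OF blR]] adjoint_comp[OF adjoint_bl[OF blR] blT]
          adjoint_adjoint_bl[OF blR])
  qed
  thus "adjoint T \<in> commutant J S" using cbounded_adjoint[OF cs cT] by (simp add: commutant_def)
qed

lemma cyclic_from_separating:
  assumes XX: "commutant J (commutant J X) = X" and starX: "starc X"
    and Xcb: "\<forall>T\<in>X. cbounded J T"
    and sep: "\<forall>T\<in>X. T \<Omega> = 0 \<longrightarrow> T = (\<lambda>x. 0)"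
  shows "closure ((\<lambda>C. C \<Omega>) ` commutant J X) = UNIV"
proof -
  define Y where "Y = commutant J X"
  have Ycb: "\<forall>R\<in>Y. cbounded J R" by (simp add: Y_def commutant_def)
  have starY: "starc Y" unfolding Y_def
    by (rule comm_star) (use Xcb starX in \<open>auto simp: cbounded_def\<close>)
  define D where "D = (\<lambda>C. C \<Omega>) ` Y"
  define K where "K = closure D"
  have sD: "subspace D" unfolding subspace_def D_def
  proof (intro conjI ballI allI)
    show "0 \<in> (\<lambda>C. C \<Omega>) ` Y" using comm_zero[OF Xcb] unfolding Y_def by force
  next
    fix a b assume "a \<in> (\<lambda>C. C \<Omega>) ` Y" "b \<in> (\<lambda>C. C \<Omega>) ` Y"
    then obtain A B where "A \<in> Y" "B \<in> Y" "a = A \<Omega>" "b = B \<Omega>" by auto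
    thus "a + b \<in> (\<lambda>C. C \<Omega>) ` Y" using comm_add[OF Xcb, of A B] unfolding Y_def by force
  next
    fix r :: real and a assume "a \<in> (\<lambda>C. C \<Omega>) ` Y"
    then obtain A where "A \<in> Y" "a = A \<Omega>" by auto
    thus "r *\<^sub>R a \<in> (\<lambda>C. C \<Omega>) ` Y" using comm_scale[OF Xcb, of A r] unfolding Y_def by force
  qed
  have sK: "subspace K" unfolding K_def by (rule subspace_closure_hs[OF sD])
  have cK: "closed K" by (simp add: K_def)
  have Kne: "K \<noteq> {}" using sK subspace_0 by blast
  have inv: "L ` K \<subseteq> K" if "bounded_linear L" "L ` D \<subseteq> D" for L
  proof -
    have "L ` K \<subseteq> closure (L ` D)" unfolding K_def by (rule closure_bounded_linear_image_subset[OF that(1)])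
    also have "\<dots> \<subseteq> K" unfolding K_def by (rule closure_mono[OF that(2)])
    finally show ?thesis .
  qed
  have invC: "C ` K \<subseteq> K" if "C \<in> Y" for C
  proof (rule inv)
    show "bounded_linear C" using Ycb that by (simp add: cbounded_def)
    show "C ` D \<subseteq> D"
    proof
      fix y assume "y \<in> C ` D"
      then obtain B where "B \<in> Y" "y = C (B \<Omega>)" by (auto simp: D_def)
      thus "y \<in> D" using comm_comp[OF that[unfolded Y_def], of B] unfolding D_def Y_def by force
    qed
  qed
  have JY: "J \<in> Y" unfolding Y_def by (rule comm_J[OF Xcb])
  have "\<forall>x. \<exists>q\<in>K. \<forall>k\<in>K. inner (x - q) k = 0"
  proof
    fix x
    obtain q where "q \<in> K" "\<forall>y\<in>K. norm (x - q) \<le> norm (x - y)"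
      using hilbert_closest[OF cK subspace_imp_convex[OF sK] Kne] by blast
    thus "\<exists>q\<in>K. \<forall>k\<in>K. inner (x - q) k = 0" using closest_orth[OF sK] by blast
  qed
  then obtain p where pK: "\<And>x. p x \<in> K" and porth: "\<And>x k. k \<in> K \<Longrightarrow> inner (x - p x) k = 0"
    by metis
  have uniq: "q = p x" if "q \<in> K" "\<And>k. k \<in> K \<Longrightarrow> inner (x - q) k = 0" for q x
  proof -
    have dK: "q - p x \<in> K" using sK that(1) pK by (simp add: subspace_diff)
    have "inner (q - p x) (q - p x) = inner (x - p x) (q - p x) - inner (x - q) (q - p x)"
      by (simp add: inner_diff_left)
    also have "\<dots> = 0" using porth[OF dK] that(2)[OF dK] by simp
    finally show ?thesis by simp
  qed
  have padd: "p (a + b) = p a + p b" for a b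
  proof (rule uniq[symmetric])
    show "p a + p b \<in> K" using sK pK by (simp add: subspace_add)
    fix k assume k: "k \<in> K"
    have "(a + b) - (p a + p b) = (a - p a) + (b - p b)" by simp
    hence "inner ((a + b) - (p a + p b)) k = inner (a - p a) k + inner (b - p b) k"
      by (simp only: inner_add_left)
    thus "inner ((a + b) - (p a + p b)) k = 0" using porth[OF k] by simp
  qed
  have pscale: "p (r *\<^sub>R a) = r *\<^sub>R p a" for r a
  proof (rule uniq[symmetric])
    show "r *\<^sub>R p a \<in> K" using sK pK by (simp add: subspace_scale)
    fix k assume k: "k \<in> K"
    have "r *\<^sub>R a - r *\<^sub>R p a = r *\<^sub>R (a - p a)" by (simp add: scaleR_diff_right)
    hence "inner (r *\<^sub>R a - r *\<^sub>R p a) k = r * inner (a - p a) k" by simp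
    thus "inner (r *\<^sub>R a - r *\<^sub>R p a) k = 0" using porth[OF k] by simp
  qed
  define Q where "Q x = x - p x" for x
  have Qnorm: "norm (Q x) \<le> norm x" for x
  proof -
    have "inner (Q x) (p x) = 0" using porth[OF pK] by (simp add: Q_def)
    hence "inner (Q x + p x) (Q x + p x) = inner (Q x) (Q x) + inner (p x) (p x)"
      by (simp add: inner_add_left inner_add_right inner_commute[of "p x" "Q x"])
    moreover have "Q x + p x = x" by (simp add: Q_def)
    ultimately have "(norm x)^2 = (norm (Q x))^2 + (norm (p x))^2"
      by (simp add: power2_norm_eq_inner)
    hence "(norm (Q x))^2 \<le> (norm x)^2" by simp
    thus ?thesis by (rule power2_le_imp_le) simp
  qed
  have blQ: "bounded_linear Q"
    by (rule bounded_linear_intro[where K=1]) (simp_all add: Q_def padd pscale Qnorm[unfolded Q_def] scaleR_diff_right)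
  have pJ: "p (J x) = J (p x)" for x
  proof (rule uniq[symmetric])
    show "J (p x) \<in> K" using invC[OF JY] pK by blast
    fix k assume k: "k \<in> K"
    have "J x - J (p x) = J (x - p x)" by (simp add: J.diff)
    hence "inner (J x - J (p x)) k = - inner (x - p x) (J k)" by (simp add: cs_inner[OF cs])
    moreover have "J k \<in> K" using invC[OF JY] k by blast
    ultimately show "inner (J x - J (p x)) k = 0" using porth by simp
  qed
  have pC: "p (C x) = C (p x)" if C: "C \<in> Y" for C x
  proof (rule uniq[symmetric])
    have blC: "bounded_linear C" using Ycb C by (simp add: cbounded_def)
    interpret C: bounded_linear C by (rule blC)
    show "C (p x) \<in> K" using invC[OF C] pK by blast
    fix k assume k: "k \<in> K"
    have "C x - C (p x) = C (x - p x)" by (simp add: C.diff)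
    hence "inner (C x - C (p x)) k = inner (x - p x) (adjoint C k)" by (simp add: adj_inner[OF blC])
    moreover have "adjoint C \<in> Y" using starY C by (simp add: starc_def)
    hence "adjoint C k \<in> K" using invC k by blast
    ultimately show "inner (C x - C (p x)) k = 0" using porth by simp
  qed
  have QJ: "Q (J x) = J (Q x)" for x by (simp add: Q_def pJ J.diff)
  have QC: "Q (C x) = C (Q x)" if C: "C \<in> Y" for C x
  proof -
    interpret C: bounded_linear C using Ycb C by (simp add: cbounded_def)
    show ?thesis by (simp add: Q_def pC[OF C] C.diff)
  qed
  have "Q \<in> commutant J Y" using blQ QJ QC by (auto simp: commutant_def cbounded_def fun_eq_iff)
  hence QX: "Q \<in> X" using XX by (simp add: Y_def)
  have OK: "\<Omega> \<in> K"
  proof -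
    have "(\<lambda>x. x) \<in> Y" unfolding Y_def by (rule comm_id)
    hence "\<Omega> \<in> D" unfolding D_def by force
    thus ?thesis unfolding K_def using closure_subset by blast
  qed
  have "\<Omega> = p \<Omega>" by (rule uniq[OF OK]) simp
  hence "Q \<Omega> = 0" by (simp add: Q_def)
  hence "Q = (\<lambda>x. 0)" using sep QX by blast
  hence "x \<in> K" for x using pK[of x] by (simp add: Q_def fun_eq_iff)
  hence "K = UNIV" by blast
  thus ?thesis by (simp add: K_def D_def Y_def)
qed
end

lemma unitary_facts:
  fixes J U :: "'h::{real_inner,complete_space} \<Rightarrow> 'h"
  assumes cs: "complex_structure J" and u: "unitary_op J U"
  shows "\<And>y. U (adjoint U y) = y" "\<And>x. adjoint U (U x) = x" "cbounded J (adjoint U)"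
    "\<And>y. norm (adjoint U y) = norm y" "\<And>x y. inner (U x) (U y) = inner x y"
proof -
  have cU: "cbounded J U" and sU: "surj U" and nU: "\<And>x. norm (U x) = norm x"
    using u by (auto simp: unitary_op_def)
  have blU: "bounded_linear U" using cU by (simp add: cbounded_def)
  interpret U: bounded_linear U by (rule blU)
  show ip: "\<And>x y. inner (U x) (U y) = inner x y"
  proof -
    fix x y
    show "inner (U x) (U y) = inner x y"
      using dot_norm[of "U x" "U y"] dot_norm[of x y] by (simp add: nU flip: U.add)
  qed
  have inj: "inj U"
  proof (rule injI)
    fix x y assume "U x = U y"
    hence "norm (U (x - y)) = 0" by (simp add: U.diff)
    thus "x = y" by (simp add: nU)
  qed
  have UiU: "U (inv U y) = y" for y using sU by (simp add: surj_f_inv_f)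
  have adj: "adjoint U = inv U"
  proof (rule adjoint_unique, intro allI)
    fix x y
    show "inner (U x) y = inner x (inv U y)" using ip[of x "inv U y"] by (simp add: UiU)
  qed
  show "\<And>y. U (adjoint U y) = y" by (simp add: adj UiU)
  show "\<And>x. adjoint U (U x) = x" by (simp add: adj inv_f_f[OF inj])
  show "cbounded J (adjoint U)" by (rule cbounded_adjoint[OF cs cU])
  show "\<And>y. norm (adjoint U y) = norm y"
  proof -
    fix y show "norm (adjoint U y) = norm y" using nU[of "adjoint U y"] by (simp add: adj UiU)
  qed
qed

lemma closed_eq_bl:
  fixes f g :: "'h::real_normed_vector \<Rightarrow> 'k::real_normed_vector"
  assumes "bounded_linear f" "bounded_linear g"
  shows "closed {x. f x = g x}"
  by (intro closed_Collect_eq linear_continuous_on assms)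

lemma dense_eq:
  fixes f g :: "'h::real_normed_vector \<Rightarrow> 'k::real_normed_vector"
  assumes "bounded_linear f" "bounded_linear g" "closure S = UNIV" "\<And>x. x \<in> S \<Longrightarrow> f x = g x"
  shows "f x = g x"
proof -
  have "S \<subseteq> {x. f x = g x}" using assms(4) by blast
  hence "closure S \<subseteq> {x. f x = g x}" using closed_eq_bl[OF assms(1,2)] by (rule closure_minimal)
  thus ?thesis using assms(3) by blast
qed

lemma ad_comm:
  fixes J U W :: "'h::{real_inner,complete_space} \<Rightarrow> 'h"
  assumes cU: "cbounded J U" and cW: "cbounded J W" and UW: "\<And>y. U (W y) = y" and WU: "\<And>x. W (U x) = x"
    and S1: "\<forall>R\<in>S. (\<lambda>y. U (R (W y))) \<in> S" and S2: "\<forall>R\<in>S. (\<lambda>y. W (R (U y))) \<in> S"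
  shows "\<forall>T\<in>commutant J S. (\<lambda>y. U (T (W y))) \<in> commutant J S"
    "\<forall>T\<in>commutant J S. (\<lambda>y. W (T (U y))) \<in> commutant J S"
proof -
  have gen: "(\<lambda>y. P (T (Q y))) \<in> commutant J S"
    if T: "T \<in> commutant J S" and cP: "cbounded J P" and cQ: "cbounded J Q"
      and PQ: "\<And>y. P (Q y) = y" and QP: "\<And>x. Q (P x) = x" and SQ: "\<forall>R\<in>S. (\<lambda>y. Q (R (P y))) \<in> S"
    for T P Q
  proof -
    have cT: "cbounded J T" using T by (simp add: commutant_def)
    have cb: "cbounded J (\<lambda>y. P (T (Q y)))"
      using cP cQ cT unfolding cbounded_def
      by (auto intro!: bounded_linear_compose[of P "\<lambda>y. T (Q y)"] bounded_linear_compose[of T Q])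
    have "P (T (Q (R y))) = R (P (T (Q y)))" if R: "R \<in> S" for R y
    proof -
      have R': "(\<lambda>y. Q (R (P y))) \<in> S" using SQ R by blast
      have "P (T (Q (R y))) = P (T (Q (R (P (Q y)))))" by (simp add: PQ)
      also have "\<dots> = P (Q (R (P (T (Q y)))))" using comm_ap[OF T R', of "Q y"] by simp
      also have "\<dots> = R (P (T (Q y)))" by (simp add: PQ)
      finally show ?thesis .
    qed
    thus ?thesis using cb by (auto simp: commutant_def fun_eq_iff)
  qed
  show "\<forall>T\<in>commutant J S. (\<lambda>y. U (T (W y))) \<in> commutant J S"
    using gen[OF _ cU cW UW WU S2] by blast
  show "\<forall>T\<in>commutant J S. (\<lambda>y. W (T (U y))) \<in> commutant J S"
    using gen[OF _ cW cU WU UW S1] by blast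
qed

lemma norm_funpow_eq:
  fixes V :: "'h::real_normed_vector \<Rightarrow> 'h"
  assumes "\<And>x. norm (V x) = norm x"
  shows "norm ((V ^^ n) x) = norm x"
proof (induction n)
  case 0 show ?case by simp
next
  case (Suc n) show ?case using assms[of "(V ^^ n) x"] Suc.IH by simp
qed

lemma funpow_fix:
  fixes V :: "'h \<Rightarrow> 'h"
  assumes "V x = x" shows "(V ^^ n) x = x"
  by (induction n) (simp_all add: assms)

lemma averaging:
  fixes J U W :: "'h::{real_inner,complete_space} \<Rightarrow> 'h" and \<Omega> x :: 'h and A :: "'h \<Rightarrow> 'h"
  assumes cs: "complex_structure J"
    and cU: "cbounded J U" and cW: "cbounded J W" and UW: "\<And>y. U (W y) = y" and WU: "\<And>x. W (U x) = x"
    and nU: "\<And>x. norm (U x) = norm x" and nW: "\<And>x. norm (W x) = norm x"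
    and UO: "U \<Omega> = \<Omega>" and z: "cmod z = 1"
    and Xcb: "\<forall>T\<in>X. cbounded J T" and XAd: "\<forall>T\<in>X. (\<lambda>y. U (T (W y))) \<in> X"
    and dense: "closure ((\<lambda>C. C \<Omega>) ` commutant J X) = UNIV"
    and AX: "A \<in> X" and ex: "U x = cscale J z x"
  shows "\<exists>T\<in>commutant J (commutant J X). (\<forall>y. U (T (W y)) = cscale J z (T y)) \<and> norm (T \<Omega> - x) \<le> norm (A \<Omega> - x)"
proof -
  interpret J: bounded_linear J by (rule cs_bl[OF cs])
  have blU: "bounded_linear U" using cU by (simp add: cbounded_def)
  interpret U: bounded_linear U by (rule blU)
  have blW: "bounded_linear W" using cW by (simp add: cbounded_def)
  have WO: "W \<Omega> = \<Omega>" using WU[of \<Omega>] UO by simp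
  have zz: "z * cnj z = 1" using complex_norm_square[of z] z by simp
  define Y where "Y = commutant J X"
  define An where "An n = (\<lambda>y. (U ^^ n) (A ((W ^^ n) y)))" for n
  have An_Suc: "An (Suc n) = (\<lambda>y. U (An n (W y)))" for n
    by (simp add: An_def fun_eq_iff funpow_swap1)
  have AnX: "An n \<in> X" for n
  proof (induction n)
    case 0
    have "An 0 = A" by (simp add: An_def fun_eq_iff)
    thus ?case using AX by simp
  next
    case (Suc n) thus ?case using XAd by (simp add: An_Suc)
  qed
  have cAn: "cbounded J (An n)" for n using AnX Xcb by blast
  have blAn: "bounded_linear (An n)" for n using cAn by (simp add: cbounded_def)
  obtain KA where KA: "KA > 0" "\<And>v. norm (A v) \<le> norm v * KA"
    using bounded_linear.pos_bounded[of A] AX Xcb by (auto simp: cbounded_def)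
  have nAn: "norm (An n y) \<le> norm y * KA" for n y
    using KA(2)[of "(W ^^ n) y"] by (simp add: An_def norm_funpow_eq[OF nU] norm_funpow_eq[OF nW])
  define g where "g y n = cscale J (cnj z ^ n) (An n y)" for y n
  define Tn where "Tn N y = (1 / real N) *\<^sub>R (\<Sum>n<N. g y n)" for N y
  have ng: "norm (g y n) \<le> norm y * KA" for y n
    using nAn[of n y] z by (simp add: g_def cscale_norm[OF cs] norm_power)
  have blg: "bounded_linear (\<lambda>y. g y n)" for n
    unfolding g_def by (rule bounded_linear_compose[OF cscale_bl[OF cs] blAn])
  have blTn: "bounded_linear (Tn N)" for N
    unfolding Tn_def[abs_def]
    by (rule bounded_linear_compose[OF bounded_linear_scaleR_right bounded_linear_sum]) (rule blg)
  have nTn: "norm (Tn N y) \<le> KA * norm y" for N y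
  proof (cases "N = 0")
    case True thus ?thesis using KA by (simp add: Tn_def)
  next
    case False
    have "norm (\<Sum>n<N. g y n) \<le> (\<Sum>n<N. norm (g y n))" by (rule norm_sum)
    also have "\<dots> \<le> (\<Sum>n<N. norm y * KA)" by (intro sum_mono ng)
    finally have "norm (\<Sum>n<N. g y n) \<le> real N * (norm y * KA)" by simp
    thus ?thesis using False by (simp add: Tn_def field_simps)
  qed
  have Tn_comm: "Tn N (C y) = C (Tn N y)" if C: "C \<in> Y" for C N y
  proof -
    have cC: "cbounded J C" using C by (simp add: Y_def commutant_def)
    interpret C: bounded_linear C using cC by (simp add: cbounded_def)
    have "g (C y) n = C (g y n)" for n
      using comm_ap[OF C[unfolded Y_def] AnX[of n], of y] cbounded_cscale_comm[OF cs cC]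
      by (simp add: g_def)
    thus ?thesis by (simp add: Tn_def C.scale C.sum)
  qed
  define V where "V v = cscale J (cnj z) (U v)" for v
  have blV: "bounded_linear V" unfolding V_def[abs_def]
    by (rule bounded_linear_compose[OF cscale_bl[OF cs] blU])
  have nV: "norm (V v) \<le> norm v" for v using z by (simp add: V_def cscale_norm[OF cs] nU)
  have Vpow: "(V ^^ n) v = cscale J (cnj z ^ n) ((U ^^ n) v)" for n v
  proof (induction n)
    case 0 show ?case by (simp add: cscale_def)
  next
    case (Suc n)
    show ?case using Suc.IH
      by (simp add: V_def cbounded_cscale_comm[OF cs cU] cscale_mult[OF cs])
  qed
  have WpO: "(W ^^ n) \<Omega> = \<Omega>" for n by (rule funpow_fix[of W, OF WO])
  have TnO: "Tn N \<Omega> = avg V N (A \<Omega>)" for N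
    by (simp add: Tn_def avg_def g_def An_def WpO Vpow)
  have convO: "convergent (\<lambda>N. Tn N \<Omega>)"
    unfolding TnO by (rule mean_ergodic[OF bounded_linear.linear[OF blV] nV])
  have convD: "convergent (\<lambda>N. Tn N d)" if dD: "d \<in> (\<lambda>C. C \<Omega>) ` commutant J X" for d
  proof -
    obtain C where C: "C \<in> Y" "d = C \<Omega>" using dD unfolding Y_def by blast
    have blC: "bounded_linear C" using C(1) by (simp add: Y_def commutant_def cbounded_def)
    obtain L where "(\<lambda>N. Tn N \<Omega>) \<longlonglongrightarrow> L" using convO by (auto simp: convergent_def)
    hence "(\<lambda>N. C (Tn N \<Omega>)) \<longlonglongrightarrow> C L" by (rule bounded_linear.tendsto[OF blC])
    thus ?thesis using Tn_comm[OF C(1)] C(2) by (auto simp: convergent_def)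
  qed
  have conv: "convergent (\<lambda>N. Tn N y)" for y
    by (rule strong_limit_ext[OF bounded_linear.linear[OF blTn] nTn _ dense convD]) (use KA in simp)
  define T where "T y = lim (\<lambda>N. Tn N y)" for y
  have lim: "(\<lambda>N. Tn N y) \<longlonglongrightarrow> T y" for y using conv[of y] by (simp add: T_def convergent_LIMSEQ_iff)
  have Tadd: "T (a + b) = T a + T b" for a b
  proof -
    have "(\<lambda>N. Tn N (a + b)) \<longlonglongrightarrow> T a + T b"
      using tendsto_add[OF lim[of a] lim[of b]] by (simp add: linear_add[OF bounded_linear.linear[OF blTn]])
    thus ?thesis using lim[of "a+b"] LIMSEQ_unique by blast
  qed
  have Tscale: "T (r *\<^sub>R a) = r *\<^sub>R T a" for r a
  proof -
    have "(\<lambda>N. Tn N (r *\<^sub>R a)) \<longlonglongrightarrow> r *\<^sub>R T a"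
      using tendsto_scaleR[OF tendsto_const lim[of a], of r] by (simp add: linear_scale[OF bounded_linear.linear[OF blTn]])
    thus ?thesis using lim[of "r *\<^sub>R a"] LIMSEQ_unique by blast
  qed
  have Tnorm: "norm (T y) \<le> norm y * KA" for y
  proof (rule LIMSEQ_le_const2[OF tendsto_norm[OF lim[of y]]])
    show "\<exists>N. \<forall>n\<ge>N. norm (Tn n y) \<le> norm y * KA" using nTn by (simp add: mult.commute)
  qed
  have blT: "bounded_linear T"
    by (rule bounded_linear_intro[where K=KA]) (simp_all add: Tadd Tscale Tnorm)
  have TC: "T (C y) = C (T y)" if C: "C \<in> Y" for C y
  proof -
    have blC: "bounded_linear C" using C by (simp add: Y_def commutant_def cbounded_def)
    have "(\<lambda>N. Tn N (C y)) \<longlonglongrightarrow> C (T y)"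
      using bounded_linear.tendsto[OF blC lim[of y]] Tn_comm[OF C] by simp
    thus ?thesis using lim[of "C y"] LIMSEQ_unique by blast
  qed
  have JY: "J \<in> Y" unfolding Y_def by (rule comm_J[OF cs Xcb])
  have TYY: "T \<in> commutant J Y"
    using blT TC[OF JY] TC by (auto simp: commutant_def cbounded_def fun_eq_iff)
  interpret CS: bounded_linear "cscale J z" by (rule cscale_bl[OF cs])
  have eig: "U (T (W y)) = cscale J z (T y)" for y
  proof -
    have zpow: "z * cnj z ^ Suc n = cnj z ^ n" for n
      using zz by (simp add: mult.assoc[symmetric])
    have Ug: "U (g (W y) n) = cscale J z (g y (Suc n))" for n
    proof -
      have "U (g (W y) n) = cscale J (cnj z ^ n) (An (Suc n) y)"
        by (simp add: g_def cbounded_cscale_comm[OF cs cU] An_Suc)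
      also have "\<dots> = cscale J (z * cnj z ^ Suc n) (An (Suc n) y)" by (simp only: zpow)
      also have "\<dots> = cscale J z (g y (Suc n))" by (simp add: g_def cscale_mult[OF cs])
      finally show ?thesis .
    qed
    have key: "U (Tn N (W y)) - cscale J z (Tn N y) = cscale J z ((1 / real N) *\<^sub>R (g y N - g y 0))" for N
    proof -
      have "U (Tn N (W y)) = (1 / real N) *\<^sub>R (\<Sum>n<N. U (g (W y) n))"
        by (simp add: Tn_def U.scale U.sum)
      also have "\<dots> = cscale J z ((1 / real N) *\<^sub>R (\<Sum>n<N. g y (Suc n)))"
        by (simp add: Ug CS.scale CS.sum)
      finally have 1: "U (Tn N (W y)) = cscale J z ((1 / real N) *\<^sub>R (\<Sum>n<N. g y (Suc n)))" .
      have 2: "(\<Sum>n<N. g y (Suc n)) - (\<Sum>n<N. g y n) = g y N - g y 0"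
        by (simp add: sum_subtractf[symmetric] sum_lessThan_telescope)
      have "U (Tn N (W y)) - cscale J z (Tn N y) = cscale J z ((1 / real N) *\<^sub>R (\<Sum>n<N. g y (Suc n))) - cscale J z ((1 / real N) *\<^sub>R (\<Sum>n<N. g y n))"
        by (simp only: 1) (simp add: Tn_def)
      also have "\<dots> = cscale J z ((1 / real N) *\<^sub>R ((\<Sum>n<N. g y (Suc n)) - (\<Sum>n<N. g y n)))"
        by (simp only: CS.diff[symmetric] scaleR_diff_right)
      also have "\<dots> = cscale J z ((1 / real N) *\<^sub>R (g y N - g y 0))" by (simp only: 2)
      finally show ?thesis .
    qed
    have l0: "(\<lambda>N. U (Tn N (W y)) - cscale J z (Tn N y)) \<longlonglongrightarrow> 0"
    proof (rule Lim_null_comparison)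
      show "\<forall>\<^sub>F N in sequentially. norm (U (Tn N (W y)) - cscale J z (Tn N y)) \<le> (2 * (norm y * KA)) / real N"
      proof (rule always_eventually, rule allI)
        fix N
        have "norm (g y N - g y 0) \<le> 2 * (norm y * KA)"
          using norm_triangle_ineq4[of "g y N" "g y 0"] ng[of y N] ng[of y 0] by linarith
        hence "(1 / real N) * norm (g y N - g y 0) \<le> (1 / real N) * (2 * (norm y * KA))"
          by (intro mult_left_mono) auto
        thus "norm (U (Tn N (W y)) - cscale J z (Tn N y)) \<le> (2 * (norm y * KA)) / real N"
          unfolding key by (simp add: cscale_norm[OF cs] z)
      qed
      show "(\<lambda>N. (2 * (norm y * KA)) / real N) \<longlonglongrightarrow> 0" by (rule lim_const_over_n)
    qed
    have "(\<lambda>N. U (Tn N (W y)) - cscale J z (Tn N y)) \<longlonglongrightarrow> U (T (W y)) - cscale J z (T y)"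
      by (intro tendsto_diff U.tendsto CS.tendsto lim)
    hence "U (T (W y)) - cscale J z (T y) = 0" using l0 LIMSEQ_unique by blast
    thus ?thesis by simp
  qed
  have Vx: "V x = x"
  proof -
    have "cnj z * z = 1" using zz by (simp add: mult.commute)
    thus ?thesis by (simp add: V_def ex cscale_mult[OF cs] cscale_one[OF cs])
  qed
  have avgx: "avg V N x = x" if "N > 0" for N
    using that by (simp add: avg_def funpow_fix[of V, OF Vx] sum_constant_scaleR)
  have TO: "norm (T \<Omega> - x) \<le> norm (A \<Omega> - x)"
  proof (rule LIMSEQ_le_const2[OF tendsto_norm[OF tendsto_diff[OF lim[of \<Omega>] tendsto_const]]])
    show "\<exists>N. \<forall>n\<ge>N. norm (Tn n \<Omega> - x) \<le> norm (A \<Omega> - x)"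
    proof (intro exI[of _ 1] allI impI)
      fix n :: nat assume "1 \<le> n"
      hence "Tn n \<Omega> - x = avg V n (A \<Omega> - x)"
        by (simp add: TnO avgx avg_diff[OF bounded_linear.linear[OF blV]])
      thus "norm (Tn n \<Omega> - x) \<le> norm (A \<Omega> - x)" using avg_norm_le[OF nV] by simp
    qed
  qed
  show ?thesis using TYY eig TO unfolding Y_def by blast
qed

lemma spectral_closure:
  fixes J U :: "'h::{real_inner,complete_space} \<Rightarrow> 'h" and \<Omega> :: 'h
  assumes cs: "complex_structure J" and u: "unitary_op J U" and UO: "U \<Omega> = \<Omega>" and z: "cmod z = 1"
    and Xcb: "\<forall>T\<in>X. cbounded J T" and XAd: "\<forall>T\<in>X. (\<lambda>y. U (T (adjoint U y))) \<in> X"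
    and XX: "commutant J (commutant J X) = X"
    and denseY: "closure ((\<lambda>C. C \<Omega>) ` commutant J X) = UNIV"
    and denseX: "closure ((\<lambda>T. T \<Omega>) ` X) = UNIV"
  shows "closure ((\<lambda>T. T \<Omega>) ` spectral_subspace J U X z) = eigenspace_U J U z"
proof
  define W where "W = adjoint U"
  have UW: "\<And>y. U (W y) = y" and WU: "\<And>x. W (U x) = x" and cW: "cbounded J W" and nW: "\<And>y. norm (W y) = norm y"
    using unitary_facts[OF cs u] by (simp_all add: W_def)
  have cU: "cbounded J U" and nU: "\<And>x. norm (U x) = norm x" using u by (auto simp: unitary_op_def)
  have WO: "W \<Omega> = \<Omega>" using WU[of \<Omega>] UO by simp
  have closedE: "closed (eigenspace_U J U z)"
    unfolding eigenspace_U_def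
    by (rule closed_eq_bl) (use cU cscale_bl[OF cs] in \<open>auto simp: cbounded_def\<close>)
  show "closure ((\<lambda>T. T \<Omega>) ` spectral_subspace J U X z) \<subseteq> eigenspace_U J U z"
  proof (rule closure_minimal[OF _ closedE])
    show "(\<lambda>T. T \<Omega>) ` spectral_subspace J U X z \<subseteq> eigenspace_U J U z"
    proof
      fix v assume "v \<in> (\<lambda>T. T \<Omega>) ` spectral_subspace J U X z"
      then obtain T where T: "U \<circ> T \<circ> W = cscale J z \<circ> T" "v = T \<Omega>"
        by (auto simp: spectral_subspace_def W_def)
      have "U (T (W \<Omega>)) = cscale J z (T \<Omega>)" using fun_cong[OF T(1), of \<Omega>] by simp
      thus "v \<in> eigenspace_U J U z" using T(2) WO by (simp add: eigenspace_U_def)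
    qed
  qed
  show "eigenspace_U J U z \<subseteq> closure ((\<lambda>T. T \<Omega>) ` spectral_subspace J U X z)"
  proof
    fix x assume x: "x \<in> eigenspace_U J U z"
    hence ex: "U x = cscale J z x" by (simp add: eigenspace_U_def)
    show "x \<in> closure ((\<lambda>T. T \<Omega>) ` spectral_subspace J U X z)"
      unfolding closure_approachable
    proof (intro allI impI)
      fix e :: real assume "0 < e"
      have "\<forall>\<epsilon>>0. \<exists>y\<in>X. dist (y \<Omega>) x < \<epsilon>"
        using denseX closure_approachable[of x "(\<lambda>T. T \<Omega>) ` X"] by auto
      then obtain A where A: "A \<in> X" "dist (A \<Omega>) x < e" using \<open>0 < e\<close> by blast
      have XAd': "\<forall>T\<in>X. (\<lambda>y. U (T (W y))) \<in> X" using XAd by (simp add: W_def)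
      obtain T where T: "T \<in> commutant J (commutant J X)" "\<forall>y. U (T (W y)) = cscale J z (T y)"
          "norm (T \<Omega> - x) \<le> norm (A \<Omega> - x)"
        using averaging[OF cs cU cW UW WU nU nW UO z Xcb XAd' denseY A(1) ex] by blast
      have TX: "T \<in> X" using T(1) XX by simp
      have "U \<circ> T \<circ> adjoint U = cscale J z \<circ> T" using T(2) by (simp add: fun_eq_iff W_def)
      hence "T \<in> spectral_subspace J U X z" using TX by (simp add: spectral_subspace_def)
      moreover have "dist (T \<Omega>) x < e" using T(3) A by (simp add: dist_norm)
      ultimately show "\<exists>y\<in>(\<lambda>T. T \<Omega>) ` spectral_subspace J U X z. dist y x < e" by blast
    qed
  qed
qed

theorem proposition2p1:
  fixes A :: "'a cstar_alg" and \<alpha> :: "'a \<Rightarrow> 'a" and \<omega> :: "'a \<Rightarrow> complex"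
    and J :: "'h::{real_inner,complete_space} \<Rightarrow> 'h"
    and \<pi> :: "'a \<Rightarrow> 'h \<Rightarrow> 'h" and U :: "'h \<Rightarrow> 'h" and \<Omega> :: 'h
  defines "M \<equiv> commutant J (commutant J (range \<pi>))"
  assumes sys: "cstar_dynamical_system A \<alpha> \<omega>"
    and gns: "gns_covariant_rep A \<alpha> \<omega> J \<pi> U \<Omega>"
    and separating: "\<forall>T\<in>M. T \<Omega> = 0 \<longrightarrow> T = (\<lambda>x. 0)"
  shows "(\<forall>z. cmod z = 1 \<longrightarrow>
            closure ((\<lambda>T. T \<Omega>) ` spectral_subspace J U M z) = eigenspace_U J U z \<and>
            closure ((\<lambda>T. T \<Omega>) ` spectral_subspace J U (commutant J M) z) = eigenspace_U J U z)
       \<and> (\<forall>z \<in> point_spectrum J U. cnj z \<in> point_spectrum J U)"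
proof -
  have cs: "complex_structure J" and piC: "\<And>a. cbounded J (\<pi> a)"
    and pim: "\<And>a b. \<pi> (cmult A a b) = \<pi> a \<circ> \<pi> b"
    and pis: "\<And>a. \<pi> (cstar A a) = adjoint (\<pi> a)"
    and cyc: "closure (range (\<lambda>a. \<pi> a \<Omega>)) = UNIV"
    and om: "\<And>a. \<omega> a = cinner J \<Omega> (\<pi> a \<Omega>)"
    and u: "unitary_op J U" and Upi: "\<And>a. U (\<pi> a \<Omega>) = \<pi> (\<alpha> a) \<Omega>"
    using gns unfolding gns_covariant_rep_def by auto
  have bija: "bij \<alpha>" and am: "\<And>a b. \<alpha> (cmult A a b) = cmult A (\<alpha> a) (\<alpha> b)"
    and oa: "\<And>a. \<omega> (\<alpha> a) = \<omega> a"
    using sys unfolding cstar_dynamical_system_def star_automorphism_def by auto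
  define W where "W = adjoint U"
  have UW: "\<And>y. U (W y) = y" and WU: "\<And>x. W (U x) = x" and cW: "cbounded J W"
    and nW: "\<And>y. norm (W y) = norm y" and ipU: "\<And>x y. inner (U x) (U y) = inner x y"
    using unitary_facts[OF cs u] by (simp_all add: W_def)
  have cU: "cbounded J U" using u by (simp add: unitary_op_def)
  have blU: "bounded_linear U" using cU by (simp add: cbounded_def)
  have blW: "bounded_linear W" using cW by (simp add: cbounded_def)
  have blpi: "\<And>a. bounded_linear (\<pi> a)" using piC by (simp add: cbounded_def)
  have WO: "W \<Omega> = \<Omega>"
  proof -
    have "inner \<Omega> (U v) = inner \<Omega> v" for v
    proof (rule dense_eq[where f="\<lambda>v. inner \<Omega> (U v)" and g="\<lambda>v. inner \<Omega> v", OF _ _ cyc])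
      show "bounded_linear (\<lambda>v. inner \<Omega> (U v))"
        by (rule bounded_linear_compose[OF bounded_linear_inner_right blU])
      show "bounded_linear (\<lambda>v. inner \<Omega> v)" by (rule bounded_linear_inner_right)
      fix v assume "v \<in> range (\<lambda>a. \<pi> a \<Omega>)"
      then obtain a where a: "v = \<pi> a \<Omega>" by auto
      have "Re (\<omega> (\<alpha> a)) = Re (\<omega> a)" by (simp add: oa)
      thus "inner \<Omega> (U v) = inner \<Omega> v" by (simp add: a Upi om cinner_def)
    qed
    hence "inner (W \<Omega>) v = inner \<Omega> v" for v
      using adj_inner2[OF blU, of \<Omega> v] by (simp add: W_def)
    thus ?thesis using vector_eq_rdot by blast
  qed
  have UO: "U \<Omega> = \<Omega>" using UW[of \<Omega>] WO by simp
  have Upi_all: "U (\<pi> a y) = \<pi> (\<alpha> a) (U y)" for a y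
  proof (rule dense_eq[where f="\<lambda>y. U (\<pi> a y)" and g="\<lambda>y. \<pi> (\<alpha> a) (U y)", OF _ _ cyc])
    show "bounded_linear (\<lambda>y. U (\<pi> a y))" by (rule bounded_linear_compose[OF blU blpi])
    show "bounded_linear (\<lambda>y. \<pi> (\<alpha> a) (U y))" by (rule bounded_linear_compose[OF blpi blU])
    fix y assume "y \<in> range (\<lambda>b. \<pi> b \<Omega>)"
    then obtain b where b: "y = \<pi> b \<Omega>" by auto
    have "U (\<pi> a (\<pi> b \<Omega>)) = U (\<pi> (cmult A a b) \<Omega>)" by (simp add: pim)
    also have "\<dots> = \<pi> (cmult A (\<alpha> a) (\<alpha> b)) \<Omega>" by (simp add: Upi am)
    also have "\<dots> = \<pi> (\<alpha> a) (U (\<pi> b \<Omega>))" by (simp add: pim Upi)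
    finally show "U (\<pi> a y) = \<pi> (\<alpha> a) (U y)" by (simp add: b)
  qed
  define S0 where "S0 = range \<pi>"
  have S0cb: "\<forall>R\<in>S0. cbounded J R" using piC by (auto simp: S0_def)
  have S0bl: "\<forall>R\<in>S0. bounded_linear R" using blpi by (auto simp: S0_def)
  have S0star: "starc S0" unfolding starc_def S0_def using pis by (metis rangeE rangeI)
  have S01: "\<forall>R\<in>S0. (\<lambda>y. U (R (W y))) \<in> S0"
  proof
    fix R assume "R \<in> S0"
    then obtain a where "R = \<pi> a" by (auto simp: S0_def)
    hence "(\<lambda>y. U (R (W y))) = \<pi> (\<alpha> a)" by (simp add: fun_eq_iff Upi_all UW)
    thus "(\<lambda>y. U (R (W y))) \<in> S0" by (simp add: S0_def)
  qed
  have S02: "\<forall>R\<in>S0. (\<lambda>y. W (R (U y))) \<in> S0"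
  proof
    fix R assume "R \<in> S0"
    then obtain b where Rb: "R = \<pi> b" by (auto simp: S0_def)
    obtain a where "b = \<alpha> a" using bija by (metis bij_pointE)
    hence "(\<lambda>y. W (R (U y))) = \<pi> a" by (simp add: fun_eq_iff Rb Upi_all[symmetric] WU)
    thus "(\<lambda>y. W (R (U y))) \<in> S0" by (simp add: S0_def)
  qed
  define C1 where "C1 = commutant J S0"
  have C1cb: "\<forall>R\<in>C1. cbounded J R" by (simp add: C1_def commutant_def)
  have C1Ad: "\<forall>R\<in>C1. (\<lambda>y. U (R (W y))) \<in> C1" "\<forall>R\<in>C1. (\<lambda>y. W (R (U y))) \<in> C1"
    using ad_comm[OF cU cW UW WU S01 S02] by (simp_all add: C1_def)
  have C1star: "starc C1" unfolding C1_def by (rule comm_star[OF cs S0bl S0star])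
  have MC: "M = commutant J C1" by (simp add: M_def C1_def S0_def)
  have Mcb: "\<forall>R\<in>M. cbounded J R" by (simp add: MC commutant_def)
  have MAd: "\<forall>R\<in>M. (\<lambda>y. U (R (W y))) \<in> M" "\<forall>R\<in>M. (\<lambda>y. W (R (U y))) \<in> M"
    using ad_comm[OF cU cW UW WU C1Ad] by (simp_all add: MC)
  have Mstar: "starc M" unfolding MC
    by (rule comm_star[OF cs _ C1star]) (use C1cb in \<open>auto simp: cbounded_def\<close>)
  have MM: "commutant J (commutant J M) = M" unfolding MC by (rule triple_comm[OF C1cb])
  define M' where "M' = commutant J M"
  have M'cb: "\<forall>R\<in>M'. cbounded J R" by (simp add: M'_def commutant_def)
  have M'Ad: "\<forall>R\<in>M'. (\<lambda>y. U (R (W y))) \<in> M'"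
    using ad_comm[OF cU cW UW WU MAd] by (simp add: M'_def)
  have M'M': "commutant J (commutant J M') = M'" unfolding M'_def by (rule triple_comm[OF Mcb])
  have S0M: "S0 \<subseteq> M" unfolding M_def S0_def by (rule double_incl) (use piC in auto)
  have denseM: "closure ((\<lambda>T. T \<Omega>) ` M) = UNIV"
  proof -
    have "range (\<lambda>a. \<pi> a \<Omega>) \<subseteq> (\<lambda>T. T \<Omega>) ` M" using S0M by (auto simp: S0_def)
    hence "closure (range (\<lambda>a. \<pi> a \<Omega>)) \<subseteq> closure ((\<lambda>T. T \<Omega>) ` M)" by (rule closure_mono)
    thus ?thesis using cyc by auto
  qed
  have denseM': "closure ((\<lambda>T. T \<Omega>) ` M') = UNIV"
    unfolding M'_def by (rule cyclic_from_separating[OF cs MM Mstar Mcb separating])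
  have part1: "closure ((\<lambda>T. T \<Omega>) ` spectral_subspace J U M z) = eigenspace_U J U z"
    if z: "cmod z = 1" for z
    by (rule spectral_closure[OF cs u UO z Mcb])
      (use MAd(1) MM denseM denseM' in \<open>simp_all add: W_def M'_def\<close>)
  have part2: "closure ((\<lambda>T. T \<Omega>) ` spectral_subspace J U M' z) = eigenspace_U J U z"
    if z: "cmod z = 1" for z
    by (rule spectral_closure[OF cs u UO z M'cb])
      (use M'Ad M'M' denseM denseM' MM in \<open>simp_all add: W_def M'_def\<close>)
  have part3: "cnj z \<in> point_spectrum J U" if zp: "z \<in> point_spectrum J U" for z
  proof -
    obtain x where x: "x \<noteq> 0" "U x = cscale J z x" using zp by (auto simp: point_spectrum_def)
    have "norm (U x) = norm x" using u by (simp add: unitary_op_def)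
    hence "cmod z * norm x = norm x" using x(2) by (simp add: cscale_norm[OF cs])
    hence z1: "cmod z = 1" using x(1) by simp
    have xin: "x \<in> closure ((\<lambda>T. T \<Omega>) ` spectral_subspace J U M z)"
      using part1[OF z1] x(2) by (simp add: eigenspace_U_def)
    obtain T where T: "T \<in> spectral_subspace J U M z" "T \<Omega> \<noteq> 0"
    proof (rule ccontr)
      assume "\<not> thesis"
      hence "\<forall>T\<in>spectral_subspace J U M z. T \<Omega> = 0" using that by blast
      hence "(\<lambda>T. T \<Omega>) ` spectral_subspace J U M z \<subseteq> {0}" by blast
      hence "closure ((\<lambda>T. T \<Omega>) ` spectral_subspace J U M z) \<subseteq> {0}"
        by (rule closure_minimal) simp
      thus False using xin x(1) by blast
    qed
    have TM: "T \<in> M" and Tad: "U \<circ> T \<circ> adjoint U = cscale J z \<circ> T"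
      using T(1) by (simp_all add: spectral_subspace_def)
    have cT: "cbounded J T" using TM Mcb by blast
    have blT: "bounded_linear T" using cT by (simp add: cbounded_def)
    define T' where "T' = adjoint T"
    have T'M: "T' \<in> M" using Mstar TM by (simp add: starc_def T'_def)
    have cT': "cbounded J T'" using T'M Mcb by blast
    have T'O: "T' \<Omega> \<noteq> 0"
    proof
      assume "T' \<Omega> = 0"
      hence "T' = (\<lambda>x. 0)" using separating T'M by blast
      hence "T = adjoint (\<lambda>x. 0)" using adjoint_adjoint_bl[OF blT] by (simp add: T'_def)
      also have "adjoint (\<lambda>x::'h. 0::'h) = (\<lambda>x. 0)" by (rule adjoint_unique) simp
      finally show False using T(2) by simp
    qed
    have h1: "T (W v) = cscale J z (W (T v))" for v
    proof -
      have "U (T (W v)) = cscale J z (T v)" using fun_cong[OF Tad, of v] by (simp add: W_def)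
      hence "W (U (T (W v))) = W (cscale J z (T v))" by simp
      thus ?thesis by (simp add: WU cbounded_cscale_comm[OF cs cW])
    qed
    have key: "U (T' y) = cscale J (cnj z) (T' (U y))" for y
    proof -
      have "inner (U (T' y)) v = inner (cscale J (cnj z) (T' (U y))) v" for v
      proof -
        have "inner (U (T' y)) v = inner (T' y) (W v)" by (simp add: adj_inner[OF blU] W_def)
        also have "\<dots> = inner y (T (W v))" by (simp add: T'_def adj_inner2[OF blT])
        also have "\<dots> = inner y (cscale J z (W (T v)))" by (simp add: h1)
        also have "\<dots> = inner (cscale J (cnj z) y) (W (T v))"
          using cscale_inner[OF cs, of "cnj z" y "W (T v)"] by simp
        also have "\<dots> = inner (U (cscale J (cnj z) y)) (U (W (T v)))" by (simp add: ipU)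
        also have "\<dots> = inner (U (cscale J (cnj z) y)) (T v)" by (simp add: UW)
        also have "\<dots> = inner (T' (U (cscale J (cnj z) y))) v" by (simp add: T'_def adj_inner2[OF blT])
        also have "\<dots> = inner (cscale J (cnj z) (T' (U y))) v"
          by (simp add: cbounded_cscale_comm[OF cs cU] cbounded_cscale_comm[OF cs cT'])
        finally show ?thesis .
      qed
      thus ?thesis using vector_eq_rdot by blast
    qed
    have "U (T' \<Omega>) = cscale J (cnj z) (T' \<Omega>)" using key[of \<Omega>] UO by simp
    thus ?thesis using T'O by (auto simp: point_spectrum_def)
  qed
  show ?thesis using part1 part2 part3 by (simp add: M'_def)
qed

end
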